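(* Fix $s\in(\tfrac12,1)$. For $k\in\mathbb{Z}$ and a positive integer $m$, let $\Lambda_m=k^2+\frac{m^2+(m+1)^2}{2}$. There exists a constant $C>0$ (independent of $k,l,m,\tau$) such that for all $k,l\in\mathbb{Z}$, all positive integers $m$ and all $\tau\in\mathbb{R}$: \[ \Big(l^2-\tfrac{m^2+(m+1)^2}{2}\Big)^2\ge C m^2; \] \[ \big|(i\tau+k^2+l^2-\Lambda_m)^{-1}\big|\le \frac{C}{\sqrt{m^2+\tau^2}}; \] \[ \big|(i\tau+k^2+l^2-\Lambda_m)^{-1}\big|\le \frac{C}{m^{1-s}|l|^{s}}\quad\text{whenever } l\neq 0; \] \[ \big|(i\tau+k^2-\Lambda_m)^{-1}\big|\le \frac{C}{\sqrt{\tau^2+m^4}}. \] *)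

theory Defs
  imports Complex_Main
begin

definition Lambda :: "int \<Rightarrow> nat \<Rightarrow> real" where
  "Lambda k m = real_of_int (k^2) + (real m ^ 2 + (real m + 1) ^ 2) / 2"

end

theory Submission
  imports Defs
begin

lemma norm_inv_aux:
  "norm (inverse (\<i> * complex_of_real t + complex_of_real a)) = 1 / sqrt (t^2 + a^2)"
proof -
  have "\<i> * complex_of_real t + complex_of_real a = Complex a t"
    by (simp add: complex_eq_iff)
  then show ?thesis by (simp add: norm_inverse complex_norm divide_inverse add.commute)
qed

lemma int_case:
  fixes l :: int and m :: nat
  shows "\<bar>l\<bar> \<le> int m \<or> \<bar>l\<bar> \<ge> int m + 1" by linarith

lemma abs_ge_m:
  fixes l :: int and m :: nat
  shows "real m \<le> \<bar>real_of_int (l^2) - (real m ^ 2 + (real m + 1) ^ 2) / 2\<bar>"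
proof -
  have E: "real_of_int (l^2) - (real m ^ 2 + (real m + 1) ^ 2) / 2 = real_of_int (l^2) - real m ^ 2 - real m - 1/2"
    by (simp add: power2_eq_square algebra_simps)
  consider "\<bar>l\<bar> \<le> int m" | "\<bar>l\<bar> \<ge> int m + 1" using int_case by blast
  then show ?thesis
  proof cases
    case 1
    then have "\<bar>l\<bar> * \<bar>l\<bar> \<le> int m * int m" by (intro mult_mono) auto
    then have "l^2 \<le> (int m)^2" by (simp add: power2_eq_square abs_mult_self_eq)
    then have "real_of_int (l^2) \<le> real_of_int ((int m)^2)" by (simp only: of_int_le_iff)
    then have "real_of_int (l^2) \<le> real m ^ 2" by simp
    then show ?thesis unfolding E by linarith
  next
    case 2
    then have "(int m + 1) * (int m + 1) \<le> \<bar>l\<bar> * \<bar>l\<bar>" by (intro mult_mono) auto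
    then have "(int m + 1)^2 \<le> l^2" by (simp add: power2_eq_square abs_mult_self_eq)
    then have "real_of_int ((int m + 1)^2) \<le> real_of_int (l^2)" by (simp only: of_int_le_iff)
    then have "(real m + 1)^2 \<le> real_of_int (l^2)" by simp
    then show ?thesis unfolding E by (simp add: power2_eq_square algebra_simps)
  qed
qed

lemma lin_aux:
  fixes L q mm y :: real
  assumes "1 + 4 * mm + 4 * q \<le> L" "y \<le> L" "1 \<le> y"
  shows "y \<le> 3 * (L - q - mm - 1/2)"
  using assms by (simp add: algebra_simps)

lemma big_l:
  fixes l :: int and m :: nat
  assumes "\<bar>l\<bar> > 2 * int m"
  shows "\<bar>real_of_int l\<bar> \<le> 3 * \<bar>real_of_int (l^2) - (real m ^ 2 + (real m + 1) ^ 2) / 2\<bar>"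
proof -
  have a: "2 * real m + 1 \<le> \<bar>real_of_int l\<bar>" using assms by linarith
  have b: "1 \<le> \<bar>real_of_int l\<bar>" using a by simp
  have c: "(2 * real m + 1)^2 \<le> \<bar>real_of_int l\<bar>^2"
    using a by (intro power_mono) auto
  have "\<bar>real_of_int l\<bar> * 1 \<le> \<bar>real_of_int l\<bar> * \<bar>real_of_int l\<bar>" using b by (intro mult_left_mono) auto
  then have d: "\<bar>real_of_int l\<bar> \<le> \<bar>real_of_int l\<bar>^2" by (simp add: power2_eq_square)
  have L: "real_of_int (l^2) = \<bar>real_of_int l\<bar>^2" by simp
  have E: "real_of_int (l^2) - (real m ^ 2 + (real m + 1) ^ 2) / 2 = \<bar>real_of_int l\<bar>^2 - real m * real m - real m - 1/2"
    unfolding L by (simp add: power2_eq_square algebra_simps)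
  have c2: "1 + 4 * real m + 4 * (real m * real m) \<le> \<bar>real_of_int l\<bar>^2"
    using c by (simp add: power2_eq_square algebra_simps)
  have P: "0 \<le> \<bar>real_of_int l\<bar>^2 - real m * real m - real m - 1/2" using c2 d b by linarith
  show ?thesis unfolding E abs_of_nonneg[OF P] using lin_aux[OF c2 d b] .
qed

lemma powr_max:
  fixes x y s :: real
  assumes "0 < x" "0 < y" "0 < s" "s < 1"
  shows "x powr (1 - s) * y powr s \<le> max x y"
proof -
  have "x powr (1 - s) \<le> max x y powr (1 - s)" using assms by (intro powr_mono2) auto
  moreover have "y powr s \<le> max x y powr s" using assms by (intro powr_mono2) auto
  ultimately have "x powr (1 - s) * y powr s \<le> max x y powr (1 - s) * max x y powr s"
    using assms by (intro mult_mono) auto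
  also have "\<dots> = max x y" using assms by (simp add: powr_add[symmetric])
  finally show ?thesis .
qed

theorem lemma2p3:
  fixes s :: real
  assumes "1/2 < s" and "s < 1"
  shows "(\<exists>C>0. \<forall>l::int. \<forall>m::nat. m \<ge> 1 \<longrightarrow>
            (real_of_int (l^2) - (real m ^ 2 + (real m + 1) ^ 2) / 2) ^ 2 \<ge> C * real m ^ 2)
       \<and> (\<exists>C>0. \<forall>k l::int. \<forall>m::nat. \<forall>\<tau>::real. m \<ge> 1 \<longrightarrow>
            norm (inverse (\<i> * complex_of_real \<tau> + complex_of_real (real_of_int (k^2) + real_of_int (l^2) - Lambda k m)))
              \<le> C / sqrt (real m ^ 2 + \<tau> ^ 2)
          \<and> (l \<noteq> 0 \<longrightarrow>
            norm (inverse (\<i> * complex_of_real \<tau> + complex_of_real (real_of_int (k^2) + real_of_int (l^2) - Lambda k m)))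
              \<le> C / (real m powr (1 - s) * \<bar>real_of_int l\<bar> powr s))
          \<and> norm (inverse (\<i> * complex_of_real \<tau> + complex_of_real (real_of_int (k^2) - Lambda k m)))
              \<le> C / sqrt (\<tau> ^ 2 + real m ^ 4))"
proof
  show "\<exists>C>0. \<forall>l::int. \<forall>m::nat. m \<ge> 1 \<longrightarrow>
            (real_of_int (l^2) - (real m ^ 2 + (real m + 1) ^ 2) / 2) ^ 2 \<ge> C * real m ^ 2"
  proof (intro exI[of _ 1] conjI allI impI)
    fix l :: int and m :: nat
    have "real m ^ 2 \<le> \<bar>real_of_int (l^2) - (real m ^ 2 + (real m + 1) ^ 2) / 2\<bar> ^ 2"
      using abs_ge_m[of m l] by (intro power_mono) auto
    then show "(real_of_int (l^2) - (real m ^ 2 + (real m + 1) ^ 2) / 2) ^ 2 \<ge> 1 * real m ^ 2"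
      by simp
  qed simp
next
  show "\<exists>C>0. \<forall>k l::int. \<forall>m::nat. \<forall>\<tau>::real. m \<ge> 1 \<longrightarrow>
            norm (inverse (\<i> * complex_of_real \<tau> + complex_of_real (real_of_int (k^2) + real_of_int (l^2) - Lambda k m)))
              \<le> C / sqrt (real m ^ 2 + \<tau> ^ 2)
          \<and> (l \<noteq> 0 \<longrightarrow>
            norm (inverse (\<i> * complex_of_real \<tau> + complex_of_real (real_of_int (k^2) + real_of_int (l^2) - Lambda k m)))
              \<le> C / (real m powr (1 - s) * \<bar>real_of_int l\<bar> powr s))
          \<and> norm (inverse (\<i> * complex_of_real \<tau> + complex_of_real (real_of_int (k^2) - Lambda k m)))
              \<le> C / sqrt (\<tau> ^ 2 + real m ^ 4)"
  proof (intro exI[of _ 3] conjI allI impI)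
    fix k l :: int and m :: nat and t :: real
    assume m: "1 \<le> m"
    define a where "a = real_of_int (l^2) - (real m ^ 2 + (real m + 1) ^ 2) / 2"
    have e1: "real_of_int (k^2) + real_of_int (l^2) - Lambda k m = a"
      by (simp add: a_def Lambda_def)
    have e2: "real_of_int (k^2) - Lambda k m = - ((real m ^ 2 + (real m + 1) ^ 2) / 2)"
      by (simp add: Lambda_def)
    have am: "real m \<le> \<bar>a\<bar>" using abs_ge_m[of m l] by (simp add: a_def)
    have mpos: "0 < real m" using m by simp
    have apos: "0 < \<bar>a\<bar>" using am mpos by linarith
    have "sqrt (a^2) \<le> sqrt (t^2 + a^2)" by (intro real_sqrt_le_mono) simp
    then have sa: "\<bar>a\<bar> \<le> sqrt (t^2 + a^2)" by simp
    have sapos: "0 < sqrt (t^2 + a^2)" using sa apos by linarith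
    show "norm (inverse (\<i> * complex_of_real t + complex_of_real (real_of_int (k^2) + real_of_int (l^2) - Lambda k m)))
              \<le> 3 / sqrt (real m ^ 2 + t ^ 2)"
    proof -
      have "real m ^ 2 \<le> \<bar>a\<bar>^2" using am mpos by (intro power_mono) auto
      then have "real m ^ 2 \<le> a^2" by simp
      then have "sqrt (real m ^ 2 + t ^ 2) \<le> sqrt (t^2 + a^2)" by simp
      moreover have "0 < sqrt (real m ^ 2 + t ^ 2)" using mpos by (simp add: add_pos_nonneg)
      ultimately have "1 / sqrt (t^2 + a^2) \<le> 1 / sqrt (real m ^ 2 + t ^ 2)"
        by (intro divide_left_mono) auto
      also have "\<dots> \<le> 3 / sqrt (real m ^ 2 + t ^ 2)" using mpos by (intro divide_right_mono) auto
      finally show ?thesis unfolding e1 norm_inv_aux .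
    qed
    show "l \<noteq> 0 \<Longrightarrow> norm (inverse (\<i> * complex_of_real t + complex_of_real (real_of_int (k^2) + real_of_int (l^2) - Lambda k m)))
              \<le> 3 / (real m powr (1 - s) * \<bar>real_of_int l\<bar> powr s)"
    proof -
      assume l: "l \<noteq> 0"
      have lpos: "0 < \<bar>real_of_int l\<bar>" using l by simp
      have X: "real m powr (1 - s) * \<bar>real_of_int l\<bar> powr s \<le> max (real m) \<bar>real_of_int l\<bar>"
        using powr_max[OF mpos lpos] assms by auto
      have "max (real m) \<bar>real_of_int l\<bar> \<le> 3 * \<bar>a\<bar>"
      proof (cases "\<bar>l\<bar> > 2 * int m")
        case True
        then show ?thesis using big_l[OF True] am by (simp add: a_def)
      next
        case False
        then have "\<bar>real_of_int l\<bar> \<le> 2 * real m" by linarith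
        then show ?thesis using am by simp
      qed
      then have "real m powr (1 - s) * \<bar>real_of_int l\<bar> powr s \<le> 3 * sqrt (t^2 + a^2)"
        using X sa by linarith
      moreover have "0 < real m powr (1 - s) * \<bar>real_of_int l\<bar> powr s" using mpos lpos by simp
      ultimately have "1 / sqrt (t^2 + a^2) \<le> 3 / (real m powr (1 - s) * \<bar>real_of_int l\<bar> powr s)"
        using sapos by (simp add: field_simps)
      then show ?thesis unfolding e1 norm_inv_aux .
    qed
    show "norm (inverse (\<i> * complex_of_real t + complex_of_real (real_of_int (k^2) - Lambda k m)))
              \<le> 3 / sqrt (t ^ 2 + real m ^ 4)"
    proof -
      define D where "D = (real m ^ 2 + (real m + 1) ^ 2) / 2"
      have "real m ^ 2 \<le> D" by (simp add: D_def power2_eq_square algebra_simps)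
      then have "(real m ^ 2)^2 \<le> D^2" by (intro power_mono) auto
      then have "real m ^ 4 \<le> D^2" by (simp add: power_mult[symmetric])
      then have "sqrt (t ^ 2 + real m ^ 4) \<le> sqrt (t^2 + (-D)^2)" by simp
      moreover have "0 < sqrt (t ^ 2 + real m ^ 4)" using mpos by (simp add: add_nonneg_pos)
      ultimately have "1 / sqrt (t^2 + (-D)^2) \<le> 1 / sqrt (t ^ 2 + real m ^ 4)"
        by (intro divide_left_mono) auto
      also have "\<dots> \<le> 3 / sqrt (t ^ 2 + real m ^ 4)" using mpos by (intro divide_right_mono) auto
      finally show ?thesis unfolding e2 norm_inv_aux D_def .
    qed
  qed simp
qed

end
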